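(* Let $T$ be an admissible LCA-tree and $z$ a positive integer. Then for every non-root node $\eta$ of $T$, \[ 0\le \mathrm{CostDecrease}(\eta,z)\le \mathrm{CostDecrease}(\mathrm{parent}(\eta),z). \] Consequently, the tree $T'$ obtained from $T$ by replacing each node value $d(\eta)$ with $\mathrm{CostDecrease}(\eta,z)$ is again an admissible LCA-tree (with value $+\infty$ at the root), so its LCA-distances form a relaxed ultrametric on the leaves.
   Context: An LCA-tree is a finite rooted tree $T$ in which every node $\eta$ (leaves included) carries a value $d(\eta)$; for leaves $\ell_i,\ell_j$, $d(\ell_i,\ell_j)=d(\ell_i\lor\ell_j)$ (lowest common ancestor, with $\ell\lor\ell=\ell$). It is admissible if $d(\eta)\ge0$ for all nodes and $d(\eta)\le d(\mathrm{parent}(\eta))$ for every non-root node. A relaxed ultrametric is a symmetric $d:L\times L\to\mathbb{R}_{\ge0}$ (here allowing $+\infty$ as a value) satisfying $d(x,z)\le\max(d(x,y),d(y,z))$ for all $x,y,z$, with $d(x,x)$ possibly nonzero. $T[\eta]$ is the subtree rooted at $\eta$ and $|T[\eta]|$ its number of leaves. For a set $\mathbf{C}$ of leaves of a tree $S$, $\mathrm{Cost}_z(S,\mathbf{C})=\sum_{\ell\text{ leaf of }S}\min_{c\in\mathbf{C}} d(\ell,c)^z$. A corresponding $z$-center of $\eta$ is a leaf $c_z(\eta)$ of $T[\eta]$ minimizing $\mathrm{Cost}_z(T[\eta],\{c\})$ over leaves $c$ of $T[\eta]$. For a non-root node $\eta$, $\mathrm{CostDecrease}(\eta,z)=|T[\eta]|\cdot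 d(\mathrm{parent}(\eta))^z-\mathrm{Cost}_z(T[\eta],\{c_z(\eta)\})$ (this does not depend on which minimizer $c_z(\eta)$ is chosen); for the root, $\mathrm{CostDecrease}=+\infty$. *)

theory Defs
  imports "HOL-Library.Extended_Real"
begin

text \<open>Convention: the root is its own parent (par r = r); for non-root nodes par is the
  genuine parent.\<close>
definition rooted_tree :: "'n set \<Rightarrow> 'n \<Rightarrow> ('n \<Rightarrow> 'n) \<Rightarrow> bool" where
  "rooted_tree N r par \<longleftrightarrow> finite N \<and> r \<in> N \<and> par r = r \<and>
     (\<forall>x\<in>N. par x \<in> N) \<and> (\<forall>x\<in>N. \<exists>k. (par ^^ k) x = r)"

definition anc :: "('n \<Rightarrow> 'n) \<Rightarrow> 'n \<Rightarrow> 'n \<Rightarrow> bool" where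
  "anc par x y \<longleftrightarrow> (\<exists>k. (par ^^ k) y = x)"

definition leaves :: "'n set \<Rightarrow> 'n \<Rightarrow> ('n \<Rightarrow> 'n) \<Rightarrow> 'n set" where
  "leaves N r par = {x\<in>N. \<not> (\<exists>y\<in>N. y \<noteq> r \<and> par y = x)}"

definition sub_leaves :: "'n set \<Rightarrow> 'n \<Rightarrow> ('n \<Rightarrow> 'n) \<Rightarrow> 'n \<Rightarrow> 'n set" where
  "sub_leaves N r par eta = {l \<in> leaves N r par. anc par eta l}"

definition lca :: "'n set \<Rightarrow> ('n \<Rightarrow> 'n) \<Rightarrow> 'n \<Rightarrow> 'n \<Rightarrow> 'n" where
  "lca N par x y = (THE e. e \<in> N \<and> anc par e x \<and> anc par e y \<and>
       (\<forall>e'\<in>N. anc par e' x \<and> anc par e' y \<longrightarrow> anc par e' e))"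

definition admissible :: "'n set \<Rightarrow> 'n \<Rightarrow> ('n \<Rightarrow> 'n) \<Rightarrow> ('n \<Rightarrow> 'a::{linorder,zero}) \<Rightarrow> bool" where
  "admissible N r par d \<longleftrightarrow> (\<forall>e\<in>N. 0 \<le> d e) \<and> (\<forall>e\<in>N - {r}. d e \<le> d (par e))"

text \<open>Cost_z(T[eta], {c}) with distances d(l,c) = d(lca l c).\<close>
definition cost1 :: "'n set \<Rightarrow> 'n \<Rightarrow> ('n \<Rightarrow> 'n) \<Rightarrow> ('n \<Rightarrow> real) \<Rightarrow> nat \<Rightarrow> 'n \<Rightarrow> 'n \<Rightarrow> real" where
  "cost1 N r par d z eta c = (\<Sum>l\<in>sub_leaves N r par eta. d (lca N par l c) ^ z)"

definition center_cost :: "'n set \<Rightarrow> 'n \<Rightarrow> ('n \<Rightarrow> 'n) \<Rightarrow> ('n \<Rightarrow> real) \<Rightarrow> nat \<Rightarrow> 'n \<Rightarrow> real" where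
  "center_cost N r par d z eta = Min (cost1 N r par d z eta ` sub_leaves N r par eta)"

definition cost_decrease :: "'n set \<Rightarrow> 'n \<Rightarrow> ('n \<Rightarrow> 'n) \<Rightarrow> ('n \<Rightarrow> real) \<Rightarrow> 'n \<Rightarrow> nat \<Rightarrow> ereal" where
  "cost_decrease N r par d eta z =
     (if eta = r then \<infinity>
      else ereal (real (card (sub_leaves N r par eta)) * d (par eta) ^ z
                  - center_cost N r par d z eta))"

definition relaxed_ultrametric :: "'a set \<Rightarrow> ('a \<Rightarrow> 'a \<Rightarrow> ereal) \<Rightarrow> bool" where
  "relaxed_ultrametric L D \<longleftrightarrow>
     (\<forall>x\<in>L. \<forall>y\<in>L. 0 \<le> D x y \<and> D x y = D y x) \<and>
     (\<forall>x\<in>L. \<forall>y\<in>L. \<forall>w\<in>L. D x w \<le> max (D x y) (D y w))"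

end

theory Submission
  imports Defs
begin

locale rt =
  fixes N :: "'n set" and r :: 'n and par :: "'n \<Rightarrow> 'n"
  assumes rt: "rooted_tree N r par"
begin

lemma finN: "finite N" and rN: "r \<in> N" and parr: "par r = r"
  and parN: "x \<in> N \<Longrightarrow> par x \<in> N" and reach: "x \<in> N \<Longrightarrow> \<exists>k. (par ^^ k) x = r"
  using rt unfolding rooted_tree_def by auto

lemma funpow_N: "x \<in> N \<Longrightarrow> (par ^^ k) x \<in> N"
  by (induction k) (auto simp: parN)

lemma funpow_r: "(par ^^ k) r = r"
  by (induction k) (auto simp: parr)

lemma anc_refl: "anc par x x"
  unfolding anc_def by (rule exI[of _ 0]) simp

lemma anc_trans: "anc par a b \<Longrightarrow> anc par b c \<Longrightarrow> anc par a c"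
  unfolding anc_def by (metis funpow_add o_apply)

lemma anc_N: "anc par a b \<Longrightarrow> b \<in> N \<Longrightarrow> a \<in> N"
  unfolding anc_def using funpow_N by blast

lemma anc_r: "x \<in> N \<Longrightarrow> anc par r x"
  unfolding anc_def using reach by blast

lemma funpow_mult: "(par ^^ n) x = x \<Longrightarrow> (par ^^ (m * n)) x = x"
proof (induction m)
  case (Suc m)
  then show ?case by (simp add: funpow_add)
qed simp

lemma fix_r: assumes "x \<in> N" "(par ^^ n) x = x" "n > 0" shows "x = r"
proof -
  obtain k where k: "(par ^^ k) x = r" using reach assms(1) by blast
  have "(par ^^ (k * n)) x = x" using funpow_mult assms(2) by blast
  moreover have "k * n = (k * n - k) + k" using assms(3) by simp
  ultimately have "x = (par ^^ (k*n - k)) ((par ^^ k) x)"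
    by (metis funpow_add o_apply)
  then show ?thesis using k funpow_r by simp
qed

lemma anc_antisym: assumes "anc par a b" "anc par b a" "b \<in> N" shows "a = b"
proof -
  obtain i j where i: "(par ^^ i) b = a" and j: "(par ^^ j) a = b"
    using assms unfolding anc_def by blast
  have "(par ^^ (j + i)) b = b" using i j by (simp add: funpow_add)
  show ?thesis
  proof (cases "j + i = 0")
    case True then show ?thesis using i by simp
  next
    case False
    then have "b = r" using fix_r assms(3) \<open>(par ^^ (j + i)) b = b\<close> by blast
    then show ?thesis using i funpow_r by simp
  qed
qed

lemma anc_lin: assumes "anc par a x" "anc par b x" shows "anc par a b \<or> anc par b a"
proof -
  obtain i j where i: "(par ^^ i) x = a" and j: "(par ^^ j) x = b"
    using assms unfolding anc_def by blast
  show ?thesis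
  proof (cases "i \<le> j")
    case True
    then have "(par ^^ (j - i)) a = b" using i j
      by (metis funpow_add le_add_diff_inverse2 o_apply)
    then show ?thesis unfolding anc_def by blast
  next
    case False
    then have "(par ^^ (i - j)) b = a" using i j
      by (metis funpow_add le_add_diff_inverse2 o_apply nat_le_linear)
    then show ?thesis unfolding anc_def by blast
  qed
qed

lemma anc_par_cases: "anc par a e \<Longrightarrow> a = e \<or> anc par a (par e)"
  unfolding anc_def
  by (metis funpow_0 funpow_Suc_right o_apply old.nat.exhaust)

lemma anc_par: "anc par (par e) e"
  unfolding anc_def by (rule exI[of _ 1]) simp

lemma par_neq: "e \<in> N \<Longrightarrow> e \<noteq> r \<Longrightarrow> par e \<noteq> e"
  using fix_r[of e 1] by auto

definition ancs where "ancs x = {a\<in>N. anc par a x}"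

lemma card_ancs_less: assumes "anc par e e'" "e \<noteq> e'" "e' \<in> N"
  shows "card (ancs e) < card (ancs e')"
proof (rule psubset_card_mono)
  show "finite (ancs e')" using finN unfolding ancs_def by simp
  have "ancs e \<subseteq> ancs e'" unfolding ancs_def using assms(1) anc_trans by blast
  moreover have "e' \<in> ancs e'" "e' \<notin> ancs e" unfolding ancs_def
    using assms anc_refl anc_antisym anc_N by blast+
  ultimately show "ancs e \<subset> ancs e'" by blast
qed

lemma ex_max_ancs: assumes "finite S" "S \<noteq> {}"
  obtains x where "x \<in> S" "\<And>y. y \<in> S \<Longrightarrow> card (ancs y) \<le> card (ancs x)"
proof -
  let ?m = "Max ((\<lambda>x. card (ancs x)) ` S)"
  have "?m \<in> (\<lambda>x. card (ancs x)) ` S" using assms by simp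
  then obtain x where "x \<in> S" "card (ancs x) = ?m" by auto
  then show ?thesis using that assms by auto
qed

lemma leaf_exists: assumes "eta \<in> N" shows "\<exists>l. l \<in> sub_leaves N r par eta"
proof -
  let ?S = "{x\<in>N. anc par eta x}"
  have "finite ?S" using finN by simp
  moreover have "eta \<in> ?S" using assms anc_refl by simp
  ultimately obtain x where x: "x \<in> ?S" and mx: "\<And>y. y \<in> ?S \<Longrightarrow> card (ancs y) \<le> card (ancs x)"
    using ex_max_ancs by blast
  have "x \<in> leaves N r par"
  proof -
    have "\<not> (\<exists>y\<in>N. y \<noteq> r \<and> par y = x)"
    proof
      assume "\<exists>y\<in>N. y \<noteq> r \<and> par y = x"
      then obtain y where y: "y \<in> N" "y \<noteq> r" "par y = x" by blast
      have "anc par x y" using anc_par y by blast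
      moreover have "x \<noteq> y" using par_neq y by blast
      ultimately have "card (ancs x) < card (ancs y)" using card_ancs_less y by blast
      moreover have "y \<in> ?S" using x y \<open>anc par x y\<close> anc_trans by blast
      ultimately show False using mx by fastforce
    qed
    then show ?thesis using x unfolding leaves_def by blast
  qed
  then show ?thesis using x unfolding sub_leaves_def by blast
qed

definition islca where "islca x y e \<longleftrightarrow> e \<in> N \<and> anc par e x \<and> anc par e y \<and>
       (\<forall>e'\<in>N. anc par e' x \<and> anc par e' y \<longrightarrow> anc par e' e)"

lemma lca_ex: assumes "x \<in> N" "y \<in> N" shows "\<exists>!e. islca x y e"
proof -
  let ?C = "{e\<in>N. anc par e x \<and> anc par e y}"
  have "finite ?C" using finN by simp
  moreover have "r \<in> ?C" using anc_r assms rN by blast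
  ultimately obtain e where e: "e \<in> ?C" and me: "\<And>e'. e' \<in> ?C \<Longrightarrow> card (ancs e') \<le> card (ancs e)"
    using ex_max_ancs by blast
  have "islca x y e" unfolding islca_def
  proof (intro conjI ballI impI)
    fix e' assume "e' \<in> N" "anc par e' x \<and> anc par e' y"
    then have "e' \<in> ?C" by blast
    have "anc par e' e \<or> anc par e e'" using anc_lin e \<open>e' \<in> ?C\<close> by blast
    then show "anc par e' e"
    proof
      assume "anc par e e'"
      show "anc par e' e"
      proof (cases "e = e'")
        case True then show ?thesis using anc_refl by simp
      next
        case False
        then have "card (ancs e) < card (ancs e')" using card_ancs_less \<open>anc par e e'\<close> \<open>e' \<in> N\<close> by blast
        then show ?thesis using me[OF \<open>e' \<in> ?C\<close>] by simp
      qed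
    qed
  qed (use e in auto)
  moreover have "islca x y e1 \<Longrightarrow> islca x y e2 \<Longrightarrow> e1 = e2" for e1 e2
    unfolding islca_def using anc_antisym by blast
  ultimately show ?thesis by blast
qed

lemma lca_is: "lca N par x y = (THE e. islca x y e)"
  unfolding lca_def islca_def ..

lemma lca_props: assumes "x \<in> N" "y \<in> N" shows "islca x y (lca N par x y)"
  unfolding lca_is using theI'[OF lca_ex[OF assms]] .

lemma lca_eq: assumes "x \<in> N" "y \<in> N" "islca x y e" shows "lca N par x y = e"
  unfolding lca_is using the1_equality[OF lca_ex[OF assms(1,2)] assms(3)] .

lemma adm_mono: assumes "admissible N r par f" "anc par a b" "b \<in> N" shows "f b \<le> f a"
proof -
  obtain k where k: "(par ^^ k) b = a" using assms(2) unfolding anc_def by blast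
  have "f b \<le> f ((par ^^ k) b)"
  proof (induction k)
    case (Suc k)
    let ?u = "(par ^^ k) b"
    have "?u \<in> N" using funpow_N assms(3) by blast
    have "f ?u \<le> f (par ?u)"
      using assms(1) \<open>?u \<in> N\<close> parr unfolding admissible_def by (cases "?u = r") auto
    then show ?case using Suc by simp
  qed simp
  then show ?thesis using k by simp
qed


lemma SL_fin: "finite (sub_leaves N r par eta)"
  using finN unfolding sub_leaves_def leaves_def by (rule finite_subset[rotated]) auto

lemma SL_N: "l \<in> sub_leaves N r par eta \<Longrightarrow> l \<in> N"
  unfolding sub_leaves_def leaves_def by auto

lemma SL_anc: "l \<in> sub_leaves N r par eta \<Longrightarrow> anc par eta l"
  unfolding sub_leaves_def by auto

lemma cost1_bound:
  assumes adm: "admissible N r par d" and eta: "eta \<in> N" and c: "c \<in> sub_leaves N r par eta"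
  shows "cost1 N r par d z eta c \<le> real (card (sub_leaves N r par eta)) * d eta ^ z"
  unfolding cost1_def
proof (rule sum_bounded_above)
  fix l assume l: "l \<in> sub_leaves N r par eta"
  have P: "islca l c (lca N par l c)" using lca_props SL_N l c by blast
  have "anc par eta (lca N par l c)" using P eta SL_anc l c unfolding islca_def by blast
  then have "d (lca N par l c) \<le> d eta" using adm_mono[OF adm] P unfolding islca_def by blast
  moreover have "0 \<le> d (lca N par l c)" using adm P unfolding admissible_def islca_def by blast
  ultimately show "d (lca N par l c) ^ z \<le> d eta ^ z" by (rule power_mono)
qed

lemma center_le: assumes "eta \<in> N" "c \<in> sub_leaves N r par eta"
  shows "center_cost N r par d z eta \<le> cost1 N r par d z eta c"
  unfolding center_cost_def using SL_fin assms(2) by simp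

lemma center_attained: assumes "eta \<in> N"
  obtains c where "c \<in> sub_leaves N r par eta" "center_cost N r par d z eta = cost1 N r par d z eta c"
proof -
  have ne: "sub_leaves N r par eta \<noteq> {}" using leaf_exists assms by blast
  have "center_cost N r par d z eta \<in> cost1 N r par d z eta ` sub_leaves N r par eta"
    unfolding center_cost_def using SL_fin ne by (intro Min_in) auto
  then show ?thesis using that by auto
qed

lemma cd_nonneg: assumes adm: "admissible N r par d" and eta: "eta \<in> N"
  shows "0 \<le> cost_decrease N r par d eta z"
proof (cases "eta = r")
  case True then show ?thesis unfolding cost_decrease_def by simp
next
  case False
  obtain c where c: "c \<in> sub_leaves N r par eta" using leaf_exists eta by blast
  have "d eta \<le> d (par eta)" using adm eta False unfolding admissible_def by blast
  moreover have "0 \<le> d eta" using adm eta unfolding admissible_def by blast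
  ultimately have "d eta ^ z \<le> d (par eta) ^ z" by (rule power_mono)
  then have "real (card (sub_leaves N r par eta)) * d eta ^ z \<le> real (card (sub_leaves N r par eta)) * d (par eta) ^ z"
    by (simp add: mult_left_mono)
  moreover have "center_cost N r par d z eta \<le> real (card (sub_leaves N r par eta)) * d eta ^ z"
    using center_le[OF eta c, where d=d and z=z] cost1_bound[OF adm eta c, where z=z] by linarith
  ultimately show ?thesis using False unfolding cost_decrease_def by simp
qed

lemma cd_mono: assumes adm: "admissible N r par d" and eta: "eta \<in> N" "eta \<noteq> r"
  shows "cost_decrease N r par d eta z \<le> cost_decrease N r par d (par eta) z"
proof (cases "par eta = r")
  case True then show ?thesis unfolding cost_decrease_def by simp
next
  case False
  define p where "p = par eta"
  have pN: "p \<in> N" using parN eta p_def by blast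
  define Se where "Se = sub_leaves N r par eta"
  define Sp where "Sp = sub_leaves N r par p"
  have sub: "Se \<subseteq> Sp" unfolding Se_def Sp_def sub_leaves_def p_def using anc_par anc_trans by blast
  obtain c where c: "c \<in> Se" and cc: "center_cost N r par d z eta = cost1 N r par d z eta c"
    using center_attained[OF eta(1)] unfolding Se_def by blast
  have cp: "c \<in> Sp" using c sub by blast
  have lcap: "lca N par l c = p" if l: "l \<in> Sp - Se" for l
  proof (rule lca_eq)
    show "l \<in> N" "c \<in> N" using l c SL_N unfolding Sp_def Se_def by blast+
    show "islca l c p" unfolding islca_def
    proof (intro conjI ballI impI)
      show "p \<in> N" by (rule pN)
      show "anc par p l" using l SL_anc unfolding Sp_def by blast
      show "anc par p c" using cp SL_anc unfolding Sp_def by blast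
      fix e' assume e': "e' \<in> N" "anc par e' l \<and> anc par e' c"
      have ec: "anc par eta c" using c SL_anc unfolding Se_def by blast
      have "l \<in> leaves N r par" using l unfolding Sp_def sub_leaves_def by blast
      then have nl: "\<not> anc par eta l" using l unfolding Se_def sub_leaves_def by blast
      from anc_lin[OF ec] e' have "anc par eta e' \<or> anc par e' eta" by blast
      then show "anc par e' p"
      proof
        assume "anc par eta e'" then show ?thesis using e' nl anc_trans by blast
      next
        assume "anc par e' eta"
        then have "e' = eta \<or> anc par e' p" using anc_par_cases p_def by blast
        then show ?thesis using e' nl by blast
      qed
    qed
  qed
  have "cost1 N r par d z p c = (\<Sum>l\<in>Sp. d (lca N par l c) ^ z)"
    unfolding cost1_def Sp_def ..
  also have "\<dots> = (\<Sum>l\<in>Se. d (lca N par l c) ^ z) + (\<Sum>l\<in>Sp - Se. d (lca N par l c) ^ z)"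
    using sum.subset_diff[OF sub] SL_fin unfolding Sp_def by (simp add: add.commute)
  also have "(\<Sum>l\<in>Sp - Se. d (lca N par l c) ^ z) = real (card (Sp - Se)) * d p ^ z"
    using lcap by simp
  finally have eq: "cost1 N r par d z p c = cost1 N r par d z eta c + real (card (Sp - Se)) * d p ^ z"
    unfolding cost1_def Se_def .
  have cardeq: "card Sp = card Se + card (Sp - Se)"
    using card_Diff_subset[OF _ sub] card_mono[OF _ sub] SL_fin unfolding Sp_def Se_def
    by (metis Diff_partition card_Un_disjoint Diff_disjoint SL_fin finite_Diff sub Sp_def Se_def)
  have "center_cost N r par d z p \<le> cost1 N r par d z p c" using center_le[OF pN] cp unfolding Sp_def by blast
  moreover have "d p \<le> d (par p)" using adm pN False p_def unfolding admissible_def by blast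
  moreover have "0 \<le> d p" using adm pN unfolding admissible_def by blast
  ultimately have A: "d p ^ z \<le> d (par p) ^ z" and B: "center_cost N r par d z p \<le> cost1 N r par d z p c"
    using power_mono by blast+
  have "real (card Se) * d p ^ z - cost1 N r par d z eta c
        \<le> real (card Sp) * d (par p) ^ z - center_cost N r par d z p"
  proof -
    have "real (card Sp) * d p ^ z \<le> real (card Sp) * d (par p) ^ z" using A by (simp add: mult_left_mono)
    moreover have "real (card Sp) = real (card Se) + real (card (Sp - Se))" using cardeq by simp
    ultimately show ?thesis using B eq by (simp add: algebra_simps)
  qed
  then show ?thesis using False eta(2) unfolding cost_decrease_def Se_def Sp_def p_def cc by simp
qed

end


lemma lca_sym: "lca N par x y = lca N par y x"
  unfolding lca_def by (simp add: conj_commute conj_left_commute)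

theorem mainTheorem5:
  fixes N :: "'n set" and r :: 'n and par :: "'n \<Rightarrow> 'n" and d :: "'n \<Rightarrow> real" and z :: nat
  assumes "rooted_tree N r par"
    and "admissible N r par d"
    and "z \<ge> 1"
  shows "(\<forall>eta\<in>N - {r}. 0 \<le> cost_decrease N r par d eta z \<and>
            cost_decrease N r par d eta z \<le> cost_decrease N r par d (par eta) z)
       \<and> admissible N r par (\<lambda>eta. cost_decrease N r par d eta z)
       \<and> relaxed_ultrametric (leaves N r par)
           (\<lambda>x y. cost_decrease N r par d (lca N par x y) z)"
proof -
  interpret rt N r par by unfold_locales (rule assms(1))
  let ?D = "\<lambda>eta. cost_decrease N r par d eta z"
  have P1: "\<forall>eta\<in>N - {r}. 0 \<le> ?D eta \<and> ?D eta \<le> ?D (par eta)"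
    using cd_nonneg[OF assms(2)] cd_mono[OF assms(2)] by blast
  have adm: "admissible N r par ?D"
    unfolding admissible_def using P1 cd_nonneg[OF assms(2)] by blast
  have LN: "x \<in> leaves N r par \<Longrightarrow> x \<in> N" for x unfolding leaves_def by blast
  have U: "relaxed_ultrametric (leaves N r par) (\<lambda>x y. ?D (lca N par x y))"
    unfolding relaxed_ultrametric_def
  proof (intro conjI ballI)
    fix x y assume xy: "x \<in> leaves N r par" "y \<in> leaves N r par"
    have "islca x y (lca N par x y)" using lca_props LN xy by blast
    then show "0 \<le> ?D (lca N par x y)" using cd_nonneg[OF assms(2)] unfolding islca_def by blast
    show "?D (lca N par x y) = ?D (lca N par y x)" by (simp add: lca_sym)
  next
    fix x y w assume xyw: "x \<in> leaves N r par" "y \<in> leaves N r par" "w \<in> leaves N r par"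
    have Nx: "x \<in> N" "y \<in> N" "w \<in> N" using xyw LN by blast+
    have A: "islca x y (lca N par x y)" using lca_props Nx by blast
    have B: "islca y w (lca N par y w)" using lca_props Nx by blast
    have C: "islca x w (lca N par x w)" using lca_props Nx by blast
    have "anc par (lca N par x y) y" "anc par (lca N par y w) y" using A B unfolding islca_def by blast+
    then have "anc par (lca N par x y) (lca N par y w) \<or> anc par (lca N par y w) (lca N par x y)"
      using anc_lin by blast
    then show "?D (lca N par x w) \<le> max (?D (lca N par x y)) (?D (lca N par y w))"
    proof
      assume h: "anc par (lca N par x y) (lca N par y w)"
      have "anc par (lca N par x y) w" using h B anc_trans unfolding islca_def by blast
      then have "anc par (lca N par x y) (lca N par x w)" using A C unfolding islca_def by blast
      then have "?D (lca N par x w) \<le> ?D (lca N par x y)"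
        using adm_mono[OF adm] C unfolding islca_def by blast
      then show ?thesis by (simp add: le_max_iff_disj)
    next
      assume h: "anc par (lca N par y w) (lca N par x y)"
      have "anc par (lca N par y w) x" using h A anc_trans unfolding islca_def by blast
      then have "anc par (lca N par y w) (lca N par x w)" using B C unfolding islca_def by blast
      then have "?D (lca N par x w) \<le> ?D (lca N par y w)"
        using adm_mono[OF adm] C unfolding islca_def by blast
      then show ?thesis by (simp add: le_max_iff_disj)
    qed
  qed
  show ?thesis using P1 adm U by blast
qed

end
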